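(* Let $\Delta\in\mathbb F^{m\times m}$ be a connection matrix with column/row partition consisting of two sets $J_0,J_1$. Let $\tilde\Delta^{t^*+1}$ be the last matrix produced by the Revised 1-Block Incremental Sweeping Algorithm applied to $\Delta$, and let $\Delta^m$ be the last matrix produced by the Incremental Sweeping Algorithm (ISA) applied to $\Delta$. Then $\tilde\Delta^{t^*+1}=\Delta^m$, and the sets of positions marked as primary pivots by the two algorithms coincide (hence the primary pivots coincide in position and value).
   Context: Throughout, $\mathbb F$ is a field and $m\ge1$. $A_{\cdot j}$ is the $j$-th column of $A$, $A_{IJ}$ the submatrix with rows in $I$ and columns in $J$. $U^{pq}$ is the $m\times m$ matrix whose only nonzero entry is a $1$ in position $(p,q)$. Superscripts on matrices are indices, not powers. A connection matrix (over $\mathbb F$) is a matrix $\Delta\in\mathbb F^{m\times m}$ together with a partition $\{1,\dots,m\}=J_0\sqcup\cdots\sqcup J_b$ (the column/row partition; the $J_k$ need not consist of consecutive integers) such that $\Delta$ is upper triangular, $\Delta\Delta=0$, and $\Delta_{ij}=0$ unless $i<j$ and $(i,j)\in\bigcup_{k=1}^bJ_{k-1}\times J_k$. For $1\le r\le m-1$ the $r$-th diagonal is $\{(j-r,j):r<j\le m\}$. Incremental Sweeping Algorithm (ISA) applied to a connection matrix $\Delta$: set $\Delta^0=\Delta^1=\Delta$. For $r=1,\dots,m-1$ in turn: (Markup) for every position $(j-r,j)$ on the $r$-th diagonal with $\Delta^r_{j-r,j}\ne0$ such that no position in column $j$ was marked as a primary pivot at an earlier iteration: if some position $(j-r,p)$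 of row $j-r$ was marked as a primary pivot at an earlier iteration, mark $(j-r,j)$ as a change-of-basis pivot of iteration $r$; otherwise mark $(j-r,j)$ permanently as a primary pivot. (Update) Let $T^r=I-\sum \frac{\Delta^r_{j-r,j}}{\Delta^r_{j-r,p}}U^{pj}$, the sum running over all change-of-basis pivots $(j-r,j)$ of iteration $r$, where $(j-r,p)$ is the primary pivot position in row $j-r$; set $\Delta^{r+1}=(T^r)^{-1}\Delta^rT^r$. Revised 1-Block Incremental Sweeping Algorithm (for $b=1$): set $C^1=\{1,\dots,m\}$, $\tilde\Delta^1=\Delta$, $t=1$. While $\tilde\Delta^t_{\cdot C^t}\ne0$: let $i_t=\max\{i:\tilde\Delta^t_{iC^t}\ne0\}$, $j_t=\min\{j\in C^t:\tilde\Delta^t_{i_tj}\ne0\}$; mark $(i_t,j_t)$ as a primary pivot; let $\tilde T^t=I-\sum_{j\in C^t,\,j>j_t}\frac{\tilde\Delta^t_{i_tj}}{\tilde\Delta^t_{i_tj_t}}U^{j_tj}$, $\tilde\Delta^{t+1}=\tilde\Delta^t\tilde T^t$, $C^{t+1}=C^t\setminus\{j_t\}$, $t\leftarrow t+1$. Let $t^*$ be the total number of primary pivots marked. *)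

theory Defs
  imports "Jordan_Normal_Form.Gauss_Jordan_Elimination"
begin

text \<open>Matrices are Jordan_Normal_Form matrices of dimension m x m, indexed 0-based
  (row/column index i of the paper corresponds to i-1 here; all notions used only
  depend on the order of indices, so this shift is harmless).\<close>

definition U_mat :: "nat \<Rightarrow> nat \<Rightarrow> nat \<Rightarrow> 'a::field mat" where
  "U_mat m p q = mat m m (\<lambda>(a,b). if a = p \<and> b = q then 1 else 0)"

definition connection_matrix_2 :: "nat \<Rightarrow> 'a::field mat \<Rightarrow> nat set \<Rightarrow> nat set \<Rightarrow> bool" where
  "connection_matrix_2 m D J0 J1 \<longleftrightarrow>
     D \<in> carrier_mat m m \<and>
     J0 \<union> J1 = {0..<m} \<and> J0 \<inter> J1 = {} \<and>
     upper_triangular D \<and> D * D = 0\<^sub>m m m \<and>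
     (\<forall>i<m. \<forall>j<m. D $$ (i,j) \<noteq> 0 \<longrightarrow> i < j \<and> i \<in> J0 \<and> j \<in> J1)"

definition isa_new_primary :: "nat \<Rightarrow> nat \<Rightarrow> 'a::field mat \<Rightarrow> (nat \<times> nat) set \<Rightarrow> (nat \<times> nat) set" where
  "isa_new_primary m r D P =
     {(i, j). r \<le> j \<and> j < m \<and> i = j - r \<and> D $$ (i, j) \<noteq> 0 \<and>
              \<not> (\<exists>k. (k, j) \<in> P) \<and> \<not> (\<exists>p. (i, p) \<in> P)}"

definition isa_cob :: "nat \<Rightarrow> nat \<Rightarrow> 'a::field mat \<Rightarrow> (nat \<times> nat) set \<Rightarrow> (nat \<times> nat) set" where
  "isa_cob m r D P =
     {(i, j). r \<le> j \<and> j < m \<and> i = j - r \<and> D $$ (i, j) \<noteq> 0 \<and>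
              \<not> (\<exists>k. (k, j) \<in> P) \<and> (\<exists>p. (i, p) \<in> P)}"

definition piv_col :: "(nat \<times> nat) set \<Rightarrow> nat \<Rightarrow> nat" where
  "piv_col P i = (THE p. (i, p) \<in> P)"

definition isa_T :: "nat \<Rightarrow> nat \<Rightarrow> 'a::field mat \<Rightarrow> (nat \<times> nat) set \<Rightarrow> 'a mat" where
  "isa_T m r D P =
     mat m m (\<lambda>(a, b). (if a = b then 1 else 0) -
       (\<Sum>(i, j)\<in>isa_cob m r D P.
          (D $$ (i, j) / D $$ (i, piv_col P i)) * (U_mat m (piv_col P i) j $$ (a, b))))"

definition isa_step :: "nat \<Rightarrow> nat \<Rightarrow> 'a::field mat \<times> (nat \<times> nat) set \<Rightarrow> 'a mat \<times> (nat \<times> nat) set" where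
  "isa_step m r S =
     (let D = fst S; P = snd S; T = isa_T m r D P in
       (the (mat_inverse T) * D * T, P \<union> isa_new_primary m r D P))"

text \<open>isa m D k = (Delta^{k+1}, primary pivots marked in iterations 1..k).\<close>
fun isa :: "nat \<Rightarrow> 'a::field mat \<Rightarrow> nat \<Rightarrow> 'a mat \<times> (nat \<times> nat) set" where
  "isa m D 0 = (D, {})"
| "isa m D (Suc k) = isa_step m (Suc k) (isa m D k)"

definition isa_final :: "nat \<Rightarrow> 'a::field mat \<Rightarrow> 'a mat \<times> (nat \<times> nat) set" where
  "isa_final m D = isa m D (m - 1)"

definition rev_active :: "nat \<Rightarrow> 'a::field mat \<Rightarrow> nat set \<Rightarrow> bool" where
  "rev_active m D C \<longleftrightarrow> (\<exists>i<m. \<exists>j\<in>C. D $$ (i, j) \<noteq> 0)"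

definition rev_i :: "nat \<Rightarrow> 'a::field mat \<Rightarrow> nat set \<Rightarrow> nat" where
  "rev_i m D C = Max {i. i < m \<and> (\<exists>j\<in>C. D $$ (i, j) \<noteq> 0)}"

definition rev_j :: "nat \<Rightarrow> 'a::field mat \<Rightarrow> nat set \<Rightarrow> nat" where
  "rev_j m D C = Min {j \<in> C. D $$ (rev_i m D C, j) \<noteq> 0}"

definition rev_T :: "nat \<Rightarrow> 'a::field mat \<Rightarrow> nat set \<Rightarrow> 'a mat" where
  "rev_T m D C =
     (let it = rev_i m D C; jt = rev_j m D C in
       mat m m (\<lambda>(a, b). (if a = b then 1 else 0) -
         (\<Sum>j\<in>{j \<in> C. j > jt}. (D $$ (it, j) / D $$ (it, jt)) * (U_mat m jt j $$ (a, b)))))"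

definition rev_step :: "nat \<Rightarrow> 'a::field mat \<times> nat set \<times> (nat \<times> nat) set \<Rightarrow> 'a mat \<times> nat set \<times> (nat \<times> nat) set" where
  "rev_step m S =
     (let D = fst S; C = fst (snd S); P = snd (snd S);
          it = rev_i m D C; jt = rev_j m D C in
       (D * rev_T m D C, C - {jt}, P \<union> {(it, jt)}))"

fun rev_loop :: "nat \<Rightarrow> nat \<Rightarrow> 'a::field mat \<times> nat set \<times> (nat \<times> nat) set \<Rightarrow> 'a mat \<times> nat set \<times> (nat \<times> nat) set" where
  "rev_loop m 0 S = S"
| "rev_loop m (Suc n) S =
     (if rev_active m (fst S) (fst (snd S)) then rev_loop m n (rev_step m S) else S)"

text \<open>Since every pass removes one element from C (initially of size m), fuel m
  suffices for the loop to terminate. Result: (final matrix, set of primary pivots).\<close>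
definition rev_final :: "nat \<Rightarrow> 'a::field mat \<Rightarrow> 'a mat \<times> (nat \<times> nat) set" where
  "rev_final m D = (let S = rev_loop m m (D, {0..<m}, {}) in (fst S, snd (snd S)))"

end

theory Submission
  imports Defs
begin


definition piv_ok :: "nat \<Rightarrow> 'a::field mat \<Rightarrow> (nat \<times> nat) set \<Rightarrow> bool" where
  "piv_ok m R P \<longleftrightarrow> (\<forall>i k. (i,k)\<in>P \<longrightarrow> i<m \<and> k<m \<and> R$$(i,k) \<noteq> 0 \<and> (\<forall>i'. i<i' \<and> i'<m \<longrightarrow> R$$(i',k) = 0))"

definition rowinj :: "(nat \<times> nat) set \<Rightarrow> bool" where
  "rowinj P \<longleftrightarrow> (\<forall>i k k'. (i,k)\<in>P \<longrightarrow> (i,k')\<in>P \<longrightarrow> k=k')"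

definition zero_np :: "nat \<Rightarrow> 'a::field mat \<Rightarrow> (nat \<times> nat) set \<Rightarrow> bool" where
  "zero_np m R P \<longleftrightarrow> (\<forall>k<m. (\<forall>i. (i,k)\<notin>P) \<longrightarrow> (\<forall>i<m. R$$(i,k)=0))"

definition comb :: "nat \<Rightarrow> 'a::field mat \<Rightarrow> 'a mat \<Rightarrow> (nat \<times> nat) set \<Rightarrow> bool" where
  "comb m D R P \<longleftrightarrow> (\<forall>j<m. \<exists>c. (\<forall>i<m. R$$(i,j) = D$$(i,j) - (\<Sum>k<j. c k * R$$(i,k))) \<and>
      (\<forall>k<j. c k \<noteq> 0 \<longrightarrow> (\<exists>i0. (i0,k)\<in>P \<and> (\<forall>i'. i0 \<le> i' \<and> i'<m \<longrightarrow> R$$(i',j)=0))))"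

definition spec :: "nat \<Rightarrow> 'a::field mat \<Rightarrow> 'a mat \<Rightarrow> (nat \<times> nat) set \<Rightarrow> bool" where
  "spec m D R P \<longleftrightarrow> R \<in> carrier_mat m m \<and> piv_ok m R P \<and> rowinj P \<and> zero_np m R P \<and> comb m D R P"

lemma colinj:
  assumes "piv_ok m R P" "(i,k)\<in>P" "(i',k)\<in>P" shows "i = i'"
proof (rule ccontr)
  assume "i \<noteq> i'"
  then consider "i < i'" | "i' < i" by linarith
  then show False using assms unfolding piv_ok_def by metis
qed

lemma piv_char:
  assumes "piv_ok m R P" "zero_np m R P"
  shows "(i,k)\<in>P \<longleftrightarrow> (i<m \<and> k<m \<and> R$$(i,k)\<noteq>0 \<and> (\<forall>i'. i<i' \<and> i'<m \<longrightarrow> R$$(i',k)=0))"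
proof
  assume "(i,k)\<in>P" thus "i<m \<and> k<m \<and> R$$(i,k)\<noteq>0 \<and> (\<forall>i'. i<i' \<and> i'<m \<longrightarrow> R$$(i',k)=0)"
    using assms(1) unfolding piv_ok_def by blast
next
  assume h: "i<m \<and> k<m \<and> R$$(i,k)\<noteq>0 \<and> (\<forall>i'. i<i' \<and> i'<m \<longrightarrow> R$$(i',k)=0)"
  then obtain i0 where i0: "(i0,k)\<in>P" using assms(2) unfolding zero_np_def by blast
  hence "i0<m" "R$$(i0,k)\<noteq>0" "\<forall>i'. i0<i' \<and> i'<m \<longrightarrow> R$$(i',k)=0" using assms(1) unfolding piv_ok_def by blast+
  with h have "i0 = i" by (metis linorder_neqE_nat)
  with i0 show "(i,k)\<in>P" by simp
qed

lemma spec_unique_col: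
  assumes S: "spec m D R P" and S': "spec m D R' P'"
  shows "j < m \<Longrightarrow> \<forall>i<m. R$$(i,j) = R'$$(i,j)"
proof (induction j rule: less_induct)
  case (less j)
  have pv: "piv_ok m R P" "rowinj P" "zero_np m R P" "comb m D R P" using S unfolding spec_def by auto
  have pv': "piv_ok m R' P'" "rowinj P'" "zero_np m R' P'" "comb m D R' P'" using S' unfolding spec_def by auto
  have IH: "\<And>k i. k<j \<Longrightarrow> i<m \<Longrightarrow> R$$(i,k) = R'$$(i,k)" using less by auto
  have Pk: "\<And>k i. k<j \<Longrightarrow> (i,k)\<in>P \<longleftrightarrow> (i,k)\<in>P'"
  proof -
    fix k i assume k: "k<j"
    show "(i,k)\<in>P \<longleftrightarrow> (i,k)\<in>P'"
      unfolding piv_char[OF pv(1) pv(3)] piv_char[OF pv'(1) pv'(3)]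
      using IH[OF k] by auto
  qed
  obtain c where c: "\<forall>i<m. R$$(i,j) = D$$(i,j) - (\<Sum>k<j. c k * R$$(i,k))"
     "\<forall>k<j. c k \<noteq> 0 \<longrightarrow> (\<exists>i0. (i0,k)\<in>P \<and> (\<forall>i'. i0 \<le> i' \<and> i'<m \<longrightarrow> R$$(i',j)=0))"
    using pv(4) less.prems unfolding comb_def by blast
  obtain c' where c': "\<forall>i<m. R'$$(i,j) = D$$(i,j) - (\<Sum>k<j. c' k * R'$$(i,k))"
     "\<forall>k<j. c' k \<noteq> 0 \<longrightarrow> (\<exists>i0. (i0,k)\<in>P' \<and> (\<forall>i'. i0 \<le> i' \<and> i'<m \<longrightarrow> R'$$(i',j)=0))"
    using pv'(4) less.prems unfolding comb_def by blast
  define d where "d k = c' k - c k" for k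
  have diff: "R$$(i,j) - R'$$(i,j) = (\<Sum>k<j. d k * R$$(i,k))" if i: "i<m" for i
  proof -
    have "(\<Sum>k<j. c' k * R'$$(i,k)) = (\<Sum>k<j. c' k * R$$(i,k))"
      using IH i by (intro sum.cong) auto
    hence "R$$(i,j) - R'$$(i,j) = (\<Sum>k<j. c' k * R$$(i,k)) - (\<Sum>k<j. c k * R$$(i,k))"
      using c(1) c'(1) i by simp
    also have "\<dots> = (\<Sum>k<j. d k * R$$(i,k))"
      unfolding d_def by (simp add: sum_subtractf[symmetric] algebra_simps)
    finally show ?thesis .
  qed
  show ?case
  proof (rule ccontr)
    assume "\<not> (\<forall>i<m. R$$(i,j) = R'$$(i,j))"
    then obtain ia where ia: "ia<m" "R$$(ia,j) \<noteq> R'$$(ia,j)" by auto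
    define K where "K = {k. k<j \<and> d k \<noteq> 0}"
    have finK: "finite K" unfolding K_def by auto
    have Kne: "K \<noteq> {}"
    proof
      assume "K = {}"
      hence "\<forall>k<j. d k = 0" unfolding K_def by auto
      hence "(\<Sum>k<j. d k * R$$(ia,k)) = 0" by simp
      with diff[OF ia(1)] ia(2) show False by simp
    qed
    have Kpiv: "\<exists>i0. (i0,k)\<in>P" if "k\<in>K" for k
    proof -
      from that have k: "k<j" "c k \<noteq> 0 \<or> c' k \<noteq> 0" unfolding K_def d_def by auto
      show ?thesis using k c(2) c'(2) Pk[OF k(1)] by blast
    qed
    define lw where "lw k = (SOME i. (i,k)\<in>P)" for k
    have lwP: "(lw k, k)\<in>P" if "k\<in>K" for k
      unfolding lw_def using Kpiv[OF that] by (rule someI_ex)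
    obtain k0 where k0: "k0\<in>K" "\<forall>k\<in>K. lw k \<le> lw k0"
    proof -
      have "Max (lw ` K) \<in> lw ` K" using finK Kne by auto
      then obtain k0 where "k0\<in>K" "lw k0 = Max (lw ` K)" by auto
      moreover have "\<forall>k\<in>K. lw k \<le> Max (lw ` K)" using finK by auto
      ultimately show ?thesis using that by auto
    qed
    define i0 where "i0 = lw k0"
    have k0j: "k0 < j" and dk0: "d k0 \<noteq> 0" using k0(1) unfolding K_def by auto
    have i0P: "(i0,k0)\<in>P" unfolding i0_def using lwP[OF k0(1)] .
    have i0m: "i0 < m" and Ri0: "R$$(i0,k0) \<noteq> 0" and Rb: "\<forall>i'. i0<i' \<and> i'<m \<longrightarrow> R$$(i',k0) = 0"
      using i0P pv(1) unfolding piv_ok_def by blast+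
    have lwlt: "lw k < i0" if "k\<in>K" "k \<noteq> k0" for k
    proof -
      have "lw k \<le> i0" using k0(2) that(1) unfolding i0_def by auto
      moreover have "lw k \<noteq> i0"
      proof
        assume "lw k = i0"
        hence "(i0,k)\<in>P" using lwP[OF that(1)] by simp
        with i0P pv(2) that(2) show False unfolding rowinj_def by blast
      qed
      ultimately show ?thesis by simp
    qed
    have dd: "R$$(i',j) - R'$$(i',j) = d k0 * R$$(i',k0)" if "i0 \<le> i'" "i'<m" for i'
    proof -
      have z: "d k * R$$(i',k) = 0" if "k \<in> {..<j} - {k0}" for k
      proof (cases "d k = 0")
        case False
        hence kK: "k\<in>K" "k\<noteq>k0" using that unfolding K_def by auto
        have "(lw k, k)\<in>P" by (rule lwP[OF kK(1)])
        moreover have "lw k < i'" using lwlt[OF kK] \<open>i0 \<le> i'\<close> by simp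
        ultimately have "R$$(i',k) = 0" using pv(1) \<open>i'<m\<close> unfolding piv_ok_def by blast
        thus ?thesis by simp
      qed simp
      have z0: "(\<Sum>k\<in>{..<j} - {k0}. d k * R$$(i',k)) = 0" by (rule sum.neutral) (use z in blast)
      have "(\<Sum>k<j. d k * R$$(i',k)) = d k0 * R$$(i',k0) + (\<Sum>k\<in>{..<j} - {k0}. d k * R$$(i',k))"
        using k0j by (subst sum.remove[of _ k0]) auto
      also have "\<dots> = d k0 * R$$(i',k0)" using z0 by simp
      finally show ?thesis using diff[OF \<open>i'<m\<close>] by simp
    qed
    have d0: "R$$(i0,j) - R'$$(i0,j) \<noteq> 0" using dd[of i0] i0m dk0 Ri0 by simp
    have d1: "R$$(i',j) = R'$$(i',j)" if "i0 < i'" "i'<m" for i'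
      using dd[of i'] that Rb by simp
    have jm: "j < m" by (rule less.prems)
    have "c k0 \<noteq> 0 \<or> c' k0 \<noteq> 0" using dk0 unfolding d_def by auto
    then show False
    proof
      assume ck: "c k0 \<noteq> 0"
      then obtain i1 where i1: "(i1,k0)\<in>P" "\<forall>i'. i1 \<le> i' \<and> i'<m \<longrightarrow> R$$(i',j)=0"
        using c(2) k0j by blast
      have "i1 = i0" using colinj[OF pv(1) i1(1) i0P] .
      hence z: "\<forall>i'. i0 \<le> i' \<and> i'<m \<longrightarrow> R$$(i',j)=0" using i1(2) by simp
      have "(i0,j)\<in>P'"
        unfolding piv_char[OF pv'(1) pv'(3)] using i0m jm d0 z d1 by auto
      moreover have "(i0,k0)\<in>P'" using Pk[OF k0j] i0P by simp
      ultimately show False using pv'(2) k0j unfolding rowinj_def by blast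
    next
      assume ck: "c' k0 \<noteq> 0"
      then obtain i1 where i1: "(i1,k0)\<in>P'" "\<forall>i'. i1 \<le> i' \<and> i'<m \<longrightarrow> R'$$(i',j)=0"
        using c'(2) k0j by blast
      have i0P': "(i0,k0)\<in>P'" using Pk[OF k0j] i0P by simp
      have "i1 = i0" using colinj[OF pv'(1) i1(1) i0P'] .
      hence z: "\<forall>i'. i0 \<le> i' \<and> i'<m \<longrightarrow> R'$$(i',j)=0" using i1(2) by simp
      have "(i0,j)\<in>P"
      proof -
        have "R$$(i0,j) \<noteq> 0" using d0 z i0m by auto
        moreover have "\<forall>i'. i0<i' \<and> i'<m \<longrightarrow> R$$(i',j) = 0" using d1 z by auto
        ultimately show ?thesis unfolding piv_char[OF pv(1) pv(3)] using i0m jm by auto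
      qed
      then show False using i0P pv(2) k0j unfolding rowinj_def by blast
    qed
  qed
qed

lemma spec_unique:
  assumes S: "spec m D R P" and S': "spec m D R' P'"
  shows "R = R' \<and> P = P'"
proof -
  have car: "R \<in> carrier_mat m m" "R' \<in> carrier_mat m m" using S S' unfolding spec_def by auto
  have RR: "R = R'"
    by (rule eq_matI, insert car spec_unique_col[OF S S'], auto)
  have "P = P'"
  proof -
    have pv: "piv_ok m R P" "zero_np m R P" "piv_ok m R' P'" "zero_np m R' P'"
      using S S' unfolding spec_def by auto
    show ?thesis
      using piv_char[OF pv(1,2)] piv_char[OF pv(3,4)] RR by auto
  qed
  with RR show ?thesis by simp
qed



lemma comb_step:
  assumes cb: "comb m D M P" and sub: "P \<subseteq> P'"
    and frz: "\<And>k i i0. (i0,k)\<in>P' \<Longrightarrow> i<m \<Longrightarrow> M'$$(i,k) = M$$(i,k)"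
    and cols: "\<And>j. j<m \<Longrightarrow> (\<forall>x<m. M'$$(x,j) = M$$(x,j)) \<or>
       (\<exists>p i a. (i,p)\<in>P' \<and> p<j \<and> i<m \<and> M$$(i,j) \<noteq> 0 \<and>
          (\<forall>i'. i<i' \<and> i'<m \<longrightarrow> M$$(i',j) = 0 \<and> M$$(i',p)=0) \<and>
          (\<forall>x<m. M'$$(x,j) = M$$(x,j) - a * M$$(x,p)) \<and> M'$$(i,j) = 0)"
  shows "comb m D M' P'"
  unfolding comb_def
proof (intro allI impI)
  fix j assume j: "j<m"
  obtain c where c: "\<forall>i<m. M$$(i,j) = D$$(i,j) - (\<Sum>k<j. c k * M$$(i,k))"
     "\<forall>k<j. c k \<noteq> 0 \<longrightarrow> (\<exists>i0. (i0,k)\<in>P \<and> (\<forall>i'. i0 \<le> i' \<and> i'<m \<longrightarrow> M$$(i',j)=0))"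
    using cb j unfolding comb_def by blast
  have sumeq: "(\<Sum>k<j. c k * M'$$(x,k)) = (\<Sum>k<j. c k * M$$(x,k))" if x: "x<m" for x
  proof (rule sum.cong)
    fix k assume "k \<in> {..<j}"
    show "c k * M'$$(x,k) = c k * M$$(x,k)"
    proof (cases "c k = 0")
      case False
      then obtain i0 where "(i0,k)\<in>P" using c(2) \<open>k \<in> {..<j}\<close> by blast
      hence "(i0,k)\<in>P'" using sub by auto
      thus ?thesis using frz x by simp
    qed simp
  qed simp
  from cols[OF j] show "\<exists>c. (\<forall>i<m. M'$$(i,j) = D$$(i,j) - (\<Sum>k<j. c k * M'$$(i,k))) \<and>
      (\<forall>k<j. c k \<noteq> 0 \<longrightarrow> (\<exists>i0. (i0,k)\<in>P' \<and> (\<forall>i'. i0 \<le> i' \<and> i'<m \<longrightarrow> M'$$(i',j)=0)))"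
  proof
    assume un: "\<forall>x<m. M'$$(x,j) = M$$(x,j)"
    show ?thesis
    proof (rule exI[of _ c], intro conjI allI impI)
      fix i assume "i<m" thus "M'$$(i,j) = D$$(i,j) - (\<Sum>k<j. c k * M'$$(i,k))"
        using un c(1) sumeq by simp
    next
      fix k assume "k<j" "c k \<noteq> 0"
      then obtain i0 where "(i0,k)\<in>P" "\<forall>i'. i0 \<le> i' \<and> i'<m \<longrightarrow> M$$(i',j)=0" using c(2) by blast
      thus "\<exists>i0. (i0,k)\<in>P' \<and> (\<forall>i'. i0 \<le> i' \<and> i'<m \<longrightarrow> M'$$(i',j)=0)" using sub un by auto
    qed
  next
    assume "\<exists>p i a. (i,p)\<in>P' \<and> p<j \<and> i<m \<and> M$$(i,j) \<noteq> 0 \<and>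
          (\<forall>i'. i<i' \<and> i'<m \<longrightarrow> M$$(i',j) = 0 \<and> M$$(i',p)=0) \<and>
          (\<forall>x<m. M'$$(x,j) = M$$(x,j) - a * M$$(x,p)) \<and> M'$$(i,j) = 0"
    then obtain p i a where op: "(i,p)\<in>P'" "p<j" "i<m" "M$$(i,j) \<noteq> 0"
      "\<forall>i'. i<i' \<and> i'<m \<longrightarrow> M$$(i',j) = 0 \<and> M$$(i',p)=0"
      "\<forall>x<m. M'$$(x,j) = M$$(x,j) - a * M$$(x,p)" "M'$$(i,j) = 0" by blast
    define c' where "c' k = c k + (if k = p then a else 0)" for k
    show ?thesis
    proof (rule exI[of _ c'], intro conjI allI impI)
      fix x assume x: "x<m"
      have "(\<Sum>k<j. c' k * M'$$(x,k)) = (\<Sum>k<j. c k * M'$$(x,k)) + (\<Sum>k<j. (if k = p then a else 0) * M'$$(x,k))"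
        unfolding c'_def by (simp add: sum.distrib distrib_right)
      also have "(\<Sum>k<j. (if k = p then a else 0) * M'$$(x,k)) = a * M'$$(x,p)"
        using op(2) by (simp add: if_distrib[of "\<lambda>t. t * _"] cong: if_cong)
      also have "M'$$(x,p) = M$$(x,p)" using frz[OF op(1) x] .
      finally show "M'$$(x,j) = D$$(x,j) - (\<Sum>k<j. c' k * M'$$(x,k))"
        using sumeq[OF x] op(6) x c(1) by simp
    next
      fix k assume k: "k<j" "c' k \<noteq> 0"
      show "\<exists>i0. (i0,k)\<in>P' \<and> (\<forall>i'. i0 \<le> i' \<and> i'<m \<longrightarrow> M'$$(i',j)=0)"
      proof (cases "k = p")
        case True
        show ?thesis
        proof (intro exI conjI allI impI)
          show "(i,k)\<in>P'" using op(1) True by simp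
        next
          fix i' assume "i \<le> i' \<and> i' < m"
          thus "M'$$(i',j) = 0" using op(5,6,7) by (cases "i = i'") auto
        qed
      next
        case False
        hence "c k \<noteq> 0" using k(2) unfolding c'_def by simp
        then obtain i0 where i0: "(i0,k)\<in>P" "\<forall>i'. i0 \<le> i' \<and> i'<m \<longrightarrow> M$$(i',j)=0" using c(2) k(1) by blast
        have "i < i0" using i0(2) op(3,4) by (meson not_le)
        show ?thesis
        proof (intro exI conjI allI impI)
          show "(i0,k)\<in>P'" using i0(1) sub by auto
        next
          fix i' assume "i0 \<le> i' \<and> i' < m"
          thus "M'$$(i',j) = 0" using op(5,6) i0(2) \<open>i < i0\<close> by simp
        qed
      qed
    qed
  qed
qed



lemma mat_mult_entry:
  assumes "A \<in> carrier_mat m m" "B \<in> carrier_mat m m" "i<m" "j<m"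
  shows "(A*B)$$(i,j) = (\<Sum>y\<in>{0..<m}. A$$(i,y)*B$$(y,j))"
  using assms by (simp add: scalar_prod_def)

lemma piv_colI: "rowinj P \<Longrightarrow> (i,p)\<in>P \<Longrightarrow> piv_col P i = p"
  unfolding piv_col_def rowinj_def by (rule the_equality) auto

definition supp_ok :: "nat \<Rightarrow> 'a::field mat \<Rightarrow> nat set \<Rightarrow> nat set \<Rightarrow> bool" where
  "supp_ok m M J0 J1 \<longleftrightarrow> (\<forall>x<m. \<forall>y<m. M$$(x,y) \<noteq> 0 \<longrightarrow> x \<in> J0 \<and> y \<in> J1)"

definition isa_inv :: "nat \<Rightarrow> 'a::field mat \<Rightarrow> nat set \<Rightarrow> nat set \<Rightarrow> nat \<Rightarrow> 'a mat \<Rightarrow> (nat\<times>nat) set \<Rightarrow> bool" where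
  "isa_inv m D J0 J1 k M P \<longleftrightarrow> M \<in> carrier_mat m m \<and> piv_ok m M P \<and> rowinj P \<and> comb m D M P \<and>
     supp_ok m M J0 J1 \<and>
     (\<forall>j<m. (\<forall>i. (i,j)\<notin>P) \<longrightarrow> (\<forall>i<m. j \<le> i + k \<longrightarrow> M$$(i,j) = 0)) \<and>
     (\<forall>i p. (i,p)\<in>P \<longrightarrow> p \<le> i + k)"

lemma isa_step_inv:
  assumes inv: "isa_inv m D J0 J1 k M P" and disj: "J0 \<inter> J1 = {}"
  shows "isa_inv m D J0 J1 (Suc k) (fst (isa_step m (Suc k) (M,P))) (snd (isa_step m (Suc k) (M,P)))"
proof -
  define r where "r = Suc k"
  have Mc: "M \<in> carrier_mat m m" and pv: "piv_ok m M P" and ri: "rowinj P" and cb: "comb m D M P"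
    and sp: "supp_ok m M J0 J1"
    and E: "\<And>j i. j<m \<Longrightarrow> (\<forall>i. (i,j)\<notin>P) \<Longrightarrow> i<m \<Longrightarrow> j \<le> i + k \<Longrightarrow> M$$(i,j) = 0"
    and F: "\<And>i p. (i,p)\<in>P \<Longrightarrow> p \<le> i + k"
    using inv unfolding isa_inv_def by blast+
  have pvE: "i<m" "p<m" "M$$(i,p) \<noteq> 0" "\<And>i'. i<i' \<Longrightarrow> i'<m \<Longrightarrow> M$$(i',p) = 0" if "(i,p)\<in>P" for i p
    using pv that unfolding piv_ok_def by blast+
  define CB where "CB = isa_cob m r M P"
  define NP where "NP = isa_new_primary m r M P"
  define T where "T = isa_T m r M P"
  define pc where "pc i = piv_col P i" for i
  have CBI: "(i,j)\<in>CB \<longleftrightarrow> r \<le> j \<and> j<m \<and> i = j-r \<and> M$$(i,j)\<noteq>0 \<and> (\<forall>k'. (k',j)\<notin>P) \<and> (\<exists>p. (i,p)\<in>P)" for i j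
    unfolding CB_def isa_cob_def by auto
  have NPI: "(i,j)\<in>NP \<longleftrightarrow> r \<le> j \<and> j<m \<and> i = j-r \<and> M$$(i,j)\<noteq>0 \<and> (\<forall>k'. (k',j)\<notin>P) \<and> (\<forall>p. (i,p)\<notin>P)" for i j
    unfolding NP_def isa_new_primary_def by auto
  have finCB: "finite CB"
  proof (rule finite_subset)
    show "CB \<subseteq> {0..<m} \<times> {0..<m}" using CBI by auto
  qed auto
  define cbb where "cbb b = ((b - r, b) \<in> CB)" for b
  define a where "a b = M$$(b-r,b) / M$$(b-r, pc (b-r))" for b
  define nn where "nn y b = (if cbb b \<and> y = pc (b-r) then a b else 0)" for y b
  have cbbP: "(b-r, pc (b-r))\<in>P" if "cbb b" for b
  proof -
    from that obtain p where "(b-r,p)\<in>P" unfolding cbb_def CBI by blast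
    thus ?thesis unfolding pc_def using piv_colI[OF ri] by simp
  qed
  have cbbI: "r \<le> b" "b<m" "M$$(b-r,b)\<noteq>0" "\<forall>k'. (k',b)\<notin>P" if "cbb b" for b
    using that unfolding cbb_def CBI by auto
  have Tc: "T \<in> carrier_mat m m" unfolding T_def isa_T_def by simp
  have Tent: "T$$(y,b) = (if y=b then 1 else 0) - nn y b" if y: "y<m" and b: "b<m" for y b
  proof -
    have "T$$(y,b) = (if y=b then 1 else 0) - (\<Sum>(i, j)\<in>CB. (M $$ (i, j) / M $$ (i, pc i)) * (U_mat m (pc i) j $$ (y, b)))"
      unfolding T_def isa_T_def pc_def CB_def using y b by simp
    also have "(\<Sum>(i, j)\<in>CB. (M $$ (i, j) / M $$ (i, pc i)) * (U_mat m (pc i) j $$ (y, b)))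
      = (\<Sum>q\<in>CB. if q = (b-r,b) then (if y = pc (b-r) then a b else 0) else 0)"
    proof (rule sum.cong)
      fix q assume q: "q\<in>CB"
      obtain i j where ij: "q = (i,j)" by fastforce
      have ji: "i = j - r" using q ij CBI by auto
      show "(case q of (i, j) \<Rightarrow> (M $$ (i, j) / M $$ (i, pc i)) * (U_mat m (pc i) j $$ (y, b)))
        = (if q = (b-r,b) then (if y = pc (b-r) then a b else 0) else 0)"
        unfolding ij U_mat_def a_def using y b ji by auto
    qed simp
    also have "\<dots> = nn y b"
      unfolding nn_def cbb_def using finCB by (simp add: sum.delta)
    finally show ?thesis .
  qed
  have nn_row: "M$$(b,z) = 0" if "nn y b \<noteq> 0" "b<m" "z<m" for y b z
  proof -
    have "cbb b" using that unfolding nn_def by (auto split: if_splits)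
    hence "M$$(b-r,b)\<noteq>0" "b-r<m" using cbbI that(2) by (auto simp: less_imp_diff_less)
    hence "b \<in> J1" using sp \<open>b<m\<close> unfolding supp_ok_def by blast
    hence "b \<notin> J0" using disj by auto
    thus ?thesis using sp that(2,3) unfolding supp_ok_def by blast
  qed
  have nn_nn: "nn x y * nn y z = 0" for x y z
  proof (cases "nn y z = 0")
    case False
    hence "cbb z" "y = pc (z-r)" unfolding nn_def by (auto split: if_splits)
    hence "(z-r, y)\<in>P" using cbbP by simp
    hence "\<not> cbb y" using cbbI by blast
    thus ?thesis unfolding nn_def by simp
  qed simp
  have nnsum: "(\<Sum>y\<in>{0..<m}. nn x y * nn y z) = 0" for x z
    by (rule sum.neutral) (use nn_nn in blast)
  have pcm: "pc (b-r) < m" if "cbb b" for b using cbbP[OF that] pvE by blast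
  have MT: "(M*T)$$(x,b) = M$$(x,b) - (if cbb b then a b * M$$(x, pc (b-r)) else 0)" if "x<m" "b<m" for x b
  proof -
    have "(M*T)$$(x,b) = (\<Sum>y\<in>{0..<m}. M$$(x,y) * ((if y=b then 1 else 0) - nn y b))"
      using mat_mult_entry[OF Mc Tc that] Tent that by simp
    also have "\<dots> = M$$(x,b) - (\<Sum>y\<in>{0..<m}. M$$(x,y) * nn y b)"
      using that by (simp add: right_diff_distrib sum_subtractf if_distrib[of "\<lambda>t. _ * t"] cong: if_cong)
    also have "(\<Sum>y\<in>{0..<m}. M$$(x,y) * nn y b) = (if cbb b then a b * M$$(x, pc (b-r)) else 0)"
      using pcm unfolding nn_def by (auto simp: if_distrib[of "\<lambda>t. _ * t"] cong: if_cong)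
    finally show ?thesis .
  qed
  have TM: "(T*M) = M"
  proof (rule eq_matI)
    fix x b assume xb: "x < dim_row M" "b < dim_col M"
    hence x: "x<m" and b: "b<m" using Mc by auto
    have "(T*M)$$(x,b) = (\<Sum>y\<in>{0..<m}. ((if x=y then 1 else 0) - nn x y) * M$$(y,b))"
      using mat_mult_entry[OF Tc Mc x b] Tent x by simp
    also have "\<dots> = M$$(x,b) - (\<Sum>y\<in>{0..<m}. nn x y * M$$(y,b))"
      using x by (simp add: left_diff_distrib sum_subtractf if_distrib[of "\<lambda>t. t * _"] cong: if_cong)
    also have "(\<Sum>y\<in>{0..<m}. nn x y * M$$(y,b)) = 0"
    proof (rule sum.neutral, intro ballI)
      fix y assume "y\<in>{0..<m}"
      thus "nn x y * M$$(y,b) = 0" using nn_row[of x y b] b by (cases "nn x y = 0") auto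
    qed
    finally show "(T*M)$$(x,b) = M$$(x,b)" by simp
  qed (use Tc Mc in auto)
  define T2 where "T2 = mat m m (\<lambda>(y,b). (if y=b then 1 else 0) + nn y b)"
  have T2c: "T2 \<in> carrier_mat m m" unfolding T2_def by simp
  have TT2: "T * T2 = 1\<^sub>m m"
  proof (rule eq_matI)
    fix x z assume "x < dim_row (1\<^sub>m m :: 'a mat)" "z < dim_col (1\<^sub>m m :: 'a mat)"
    hence x: "x<m" and z: "z<m" by auto
    have "(T*T2)$$(x,z) = (\<Sum>y\<in>{0..<m}. ((if x=y then 1 else 0) - nn x y) * ((if y=z then 1 else 0) + nn y z))"
      using mat_mult_entry[OF Tc T2c x z] Tent x z unfolding T2_def by simp
    also have "\<dots> = (\<Sum>y\<in>{0..<m}. (if x=y then 1 else 0) * (if y=z then 1 else 0) + (if x=y then 1 else 0) * nn y z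
        - nn x y * (if y=z then 1 else 0) - nn x y * nn y z)"
      by (rule sum.cong) (auto simp: algebra_simps)
    also have "\<dots> = (if x = z then 1 else 0)"
      using x z nnsum by (simp add: sum.distrib sum_subtractf if_distrib[of "\<lambda>t. t * _"] if_distrib[of "\<lambda>t. _ * t"] cong: if_cong)
    finally show "(T*T2)$$(x,z) = 1\<^sub>m m $$ (x,z)" using x z by simp
  qed (use Tc T2c in auto)
  have T2T: "T2 * T = 1\<^sub>m m"
  proof (rule eq_matI)
    fix x z assume "x < dim_row (1\<^sub>m m :: 'a mat)" "z < dim_col (1\<^sub>m m :: 'a mat)"
    hence x: "x<m" and z: "z<m" by auto
    have "(T2*T)$$(x,z) = (\<Sum>y\<in>{0..<m}. ((if x=y then 1 else 0) + nn x y) * ((if y=z then 1 else 0) - nn y z))"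
      using mat_mult_entry[OF T2c Tc x z] Tent x z unfolding T2_def by simp
    also have "\<dots> = (\<Sum>y\<in>{0..<m}. (if x=y then 1 else 0) * (if y=z then 1 else 0) - (if x=y then 1 else 0) * nn y z
        + nn x y * (if y=z then 1 else 0) - nn x y * nn y z)"
      by (rule sum.cong) (auto simp: algebra_simps)
    also have "\<dots> = (if x = z then 1 else 0)"
      using x z nnsum by (simp add: sum.distrib sum_subtractf if_distrib[of "\<lambda>t. t * _"] if_distrib[of "\<lambda>t. _ * t"] cong: if_cong)
    finally show "(T2*T)$$(x,z) = 1\<^sub>m m $$ (x,z)" using x z by simp
  qed (use Tc T2c in auto)
  have unit: "T \<in> Units (ring_mat TYPE('a) m b)" for b
  proof -
    interpret mm: semiring "ring_mat TYPE('a) m b" by (rule semiring_mat)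
    show ?thesis unfolding Units_def
      by (rule, rule conjI[OF _ bexI[of _ T2]], use TT2 T2T Tc T2c in \<open>auto simp: ring_mat_def\<close>)
  qed
  obtain S where S: "mat_inverse T = Some S"
  proof (cases "mat_inverse T")
    case None thus ?thesis using mat_inverse(1)[OF Tc None, of "()"] unit[of "()"] by simp
  next
    case (Some S) thus ?thesis using that by blast
  qed
  have ST: "S * T = 1\<^sub>m m" and Sc: "S \<in> carrier_mat m m" using mat_inverse(2)[OF Tc S] by auto
  have step: "isa_step m r (M,P) = (M*T, P \<union> NP)"
  proof -
    have e0: "isa_step m r (M,P) = (the (mat_inverse T) * M * T, P \<union> NP)"
      unfolding isa_step_def Let_def T_def NP_def by simp
    have "S * M * T = S * (T * M) * T" by (simp only: TM)
    also have "S * (T * M) = (S * T) * M" by (rule assoc_mult_mat[symmetric, OF Sc Tc Mc])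
    also have "(S * T) * M = M" unfolding ST by (rule left_mult_one_mat[OF Mc])
    finally show ?thesis unfolding e0 S by simp
  qed
  define M' where "M' = M*T"
  have M'c: "M' \<in> carrier_mat m m" unfolding M'_def using Mc Tc by simp
  have M'e: "M'$$(x,b) = M$$(x,b) - (if cbb b then a b * M$$(x, pc (b-r)) else 0)" if "x<m" "b<m" for x b
    unfolding M'_def using MT[OF that] .
  have frzP: "\<not> cbb k'" if "(i0,k')\<in>P \<union> NP" for i0 k'
  proof
    assume c: "cbb k'"
    show False
    proof (cases "(i0,k')\<in>P")
      case True thus False using cbbI[OF c] by blast
    next
      case False
      hence "(i0,k')\<in>NP" using that by auto
      hence "i0 = k' - r" "\<forall>p. (i0,p)\<notin>P" using NPI by auto
      thus False using cbbP[OF c] by auto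
    qed
  qed
  have new_pivot: "i<m \<and> j<m \<and> M$$(i,j) \<noteq> 0 \<and> (\<forall>i'. i<i' \<and> i'<m \<longrightarrow> M$$(i',j) = 0)" if "(i,j)\<in>NP" for i j
  proof -
    have h: "r \<le> j" "j<m" "i = j-r" "M$$(i,j)\<noteq>0" "\<forall>k'. (k',j)\<notin>P" using that NPI by auto
    have "\<forall>i'. i<i' \<and> i'<m \<longrightarrow> M$$(i',j) = 0"
      using h E[of j] unfolding r_def by auto
    thus ?thesis using h by auto
  qed
  have inv': "isa_inv m D J0 J1 r M' (P \<union> NP)"
    unfolding isa_inv_def
  proof (intro conjI)
    show "M' \<in> carrier_mat m m" by (rule M'c)
    show "piv_ok m M' (P \<union> NP)"
      unfolding piv_ok_def
    proof (intro allI impI)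
      fix i k' assume ik: "(i,k')\<in>P \<union> NP"
      have nc: "\<not> cbb k'" by (rule frzP[OF ik])
      have km: "k'<m" "i<m" using ik pvE new_pivot by blast+
      have col: "M'$$(x,k') = M$$(x,k')" if "x<m" for x using M'e[OF that km(1)] nc by simp
      show "i<m \<and> k'<m \<and> M'$$(i,k') \<noteq> 0 \<and> (\<forall>i'. i<i' \<and> i'<m \<longrightarrow> M'$$(i',k') = 0)"
        using ik pvE new_pivot col km by auto
    qed
    show "rowinj (P \<union> NP)"
      unfolding rowinj_def
    proof (intro allI impI)
      fix i k1 k2 assume a1: "(i,k1)\<in>P \<union> NP" and a2: "(i,k2)\<in>P \<union> NP"
      show "k1 = k2"
      proof (cases "(i,k1)\<in>P")
        case True
        hence "(i,k2)\<in>P" using a2 NPI by blast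
        thus ?thesis using True ri unfolding rowinj_def by blast
      next
        case False
        hence n1: "(i,k1)\<in>NP" using a1 by auto
        hence "(i,k2)\<notin>P" using NPI by blast
        hence "(i,k2)\<in>NP" using a2 by auto
        thus ?thesis using n1 NPI by auto
      qed
    qed
    show "comb m D M' (P \<union> NP)"
    proof (rule comb_step[OF cb])
      show "P \<subseteq> P \<union> NP" by auto
    next
      fix k' i i0 assume "(i0,k')\<in>P \<union> NP" "i<m"
      moreover have "k'<m" using \<open>(i0,k')\<in>P \<union> NP\<close> pvE new_pivot by blast
      ultimately show "M'$$(i,k') = M$$(i,k')" using M'e frzP by simp
    next
      fix j assume j: "j<m"
      show "(\<forall>x<m. M'$$(x,j) = M$$(x,j)) \<or>
       (\<exists>p i a. (i,p)\<in>P \<union> NP \<and> p<j \<and> i<m \<and> M$$(i,j) \<noteq> 0 \<and>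
          (\<forall>i'. i<i' \<and> i'<m \<longrightarrow> M$$(i',j) = 0 \<and> M$$(i',p)=0) \<and>
          (\<forall>x<m. M'$$(x,j) = M$$(x,j) - a * M$$(x,p)) \<and> M'$$(i,j) = 0)"
      proof (cases "cbb j")
        case False thus ?thesis using M'e j by simp
      next
        case True
        note ci = cbbI[OF True]
        have pP: "(j-r, pc (j-r))\<in>P" by (rule cbbP[OF True])
        have "pc (j-r) \<le> (j-r) + k" by (rule F[OF pP])
        hence plt: "pc (j-r) < j" using ci(1) unfolding r_def by linarith
        have below: "\<forall>i'. j-r<i' \<and> i'<m \<longrightarrow> M$$(i',j) = 0 \<and> M$$(i',pc (j-r))=0"
          using E[of j] ci pvE(4)[OF pP] unfolding r_def by auto
        have "M$$(j-r, pc (j-r)) \<noteq> 0" using pvE(3)[OF pP] .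
        hence z: "M'$$(j-r,j) = 0" using M'e[of "j-r" j] j True unfolding a_def by simp
        show ?thesis
          apply (rule disjI2)
          apply (rule exI[of _ "pc (j-r)"], rule exI[of _ "j-r"], rule exI[of _ "a j"])
          using pP plt ci below M'e True z j by auto
      qed
    qed
    show "supp_ok m M' J0 J1"
      unfolding supp_ok_def
    proof (intro allI impI)
      fix x y assume xy: "x<m" "y<m" "M'$$(x,y) \<noteq> 0"
      show "x\<in>J0 \<and> y\<in>J1"
      proof (cases "M$$(x,y) = 0")
        case False thus ?thesis using sp xy unfolding supp_ok_def by blast
      next
        case True
        hence c: "cbb y" "M$$(x, pc (y-r)) \<noteq> 0" using xy M'e by (auto split: if_splits)
        have "x\<in>J0" using sp xy(1) c(2) pcm[OF c(1)] unfolding supp_ok_def by blast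
        moreover have "y\<in>J1" using sp cbbI[OF c(1)] unfolding supp_ok_def by (meson diff_le_self le_less_trans)
        ultimately show ?thesis by simp
      qed
    qed
    show "\<forall>j<m. (\<forall>i. (i,j)\<notin>P \<union> NP) \<longrightarrow> (\<forall>i<m. j \<le> i + r \<longrightarrow> M'$$(i,j) = 0)"
    proof (intro allI impI)
      fix j i assume j: "j<m" and nj: "\<forall>i. (i,j)\<notin>P \<union> NP" and i: "i<m" and ji: "j \<le> i + r"
      have nP: "\<forall>i. (i,j)\<notin>P" using nj by auto
      show "M'$$(i,j) = 0"
      proof (cases "j \<le> i + k")
        case True
        have "M$$(i,j) = 0" using E[OF j nP i True] .
        moreover have "cbb j \<Longrightarrow> M$$(i, pc (j-r)) = 0"
        proof -
          assume c: "cbb j"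
          have "j - r < i" using True cbbI[OF c] unfolding r_def by linarith
          thus ?thesis using pvE(4)[OF cbbP[OF c]] i by blast
        qed
        ultimately show ?thesis using M'e[OF i j] by simp
      next
        case False
        hence ieq: "i = j - r" "r \<le> j" using ji unfolding r_def by auto
        show ?thesis
        proof (cases "cbb j")
          case True
          have "M$$(j-r, pc (j-r)) \<noteq> 0" using pvE(3)[OF cbbP[OF True]] .
          thus ?thesis using M'e[OF i j] True ieq unfolding a_def by simp
        next
          case nc: False
          have "M$$(i,j) = 0"
          proof (rule ccontr)
            assume nz: "M$$(i,j) \<noteq> 0"
            show False
            proof (cases "\<exists>p. (i,p)\<in>P")
              case True
              hence "(i,j)\<in>CB" using CBI ieq nz nP j by auto
              thus False using nc ieq unfolding cbb_def by simp
            next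
              case False
              hence "(i,j)\<in>NP" using NPI ieq nz nP j by auto
              thus False using nj by auto
            qed
          qed
          thus ?thesis using M'e[OF i j] nc by simp
        qed
      qed
    qed
    show "\<forall>i p. (i,p)\<in>P \<union> NP \<longrightarrow> p \<le> i + r"
      using F NPI unfolding r_def by fastforce
  qed
  show ?thesis using inv' step unfolding M'_def r_def by simp
qed



lemma isa_all:
  assumes cm: "connection_matrix_2 m D J0 J1"
  shows "isa_inv m D J0 J1 k (fst (isa m D k)) (snd (isa m D k))"
proof (induction k)
  case 0
  have Dc: "D \<in> carrier_mat m m" and dj: "J0 \<inter> J1 = {}"
    and nz: "\<And>i j. i<m \<Longrightarrow> j<m \<Longrightarrow> D$$(i,j) \<noteq> 0 \<Longrightarrow> i < j \<and> i \<in> J0 \<and> j \<in> J1"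
    using cm unfolding connection_matrix_2_def by blast+
  have cb: "comb m D D {}" unfolding comb_def by (intro allI impI exI[of _ "\<lambda>_. 0"]) simp
  have E0: "\<forall>j<m. (\<forall>i. (i,j)\<notin>({}::(nat\<times>nat) set)) \<longrightarrow> (\<forall>i<m. j \<le> i + 0 \<longrightarrow> D$$(i,j) = 0)"
    using nz by (metis add_0_right leD)
  have S0: "supp_ok m D J0 J1" unfolding supp_ok_def using nz by blast
  have "isa_inv m D J0 J1 0 D {}" unfolding isa_inv_def
    using Dc cb E0 S0 unfolding piv_ok_def rowinj_def by blast
  thus ?case by simp
next
  case (Suc k)
  have dj: "J0 \<inter> J1 = {}" using cm unfolding connection_matrix_2_def by blast
  have "isa m D (Suc k) = isa_step m (Suc k) (fst (isa m D k), snd (isa m D k))" by simp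
  thus ?case using isa_step_inv[OF Suc dj] by simp
qed

lemma isa_spec:
  assumes cm: "connection_matrix_2 m D J0 J1" and m: "m \<ge> 1"
  shows "spec m D (fst (isa_final m D)) (snd (isa_final m D))"
proof -
  have inv: "isa_inv m D J0 J1 (m-1) (fst (isa_final m D)) (snd (isa_final m D))"
    unfolding isa_final_def by (rule isa_all[OF cm])
  show ?thesis using inv m unfolding isa_inv_def spec_def zero_np_def by auto
qed

definition rev_inv :: "nat \<Rightarrow> 'a::field mat \<Rightarrow> 'a mat \<Rightarrow> nat set \<Rightarrow> (nat\<times>nat) set \<Rightarrow> bool" where
  "rev_inv m D M C P \<longleftrightarrow> M \<in> carrier_mat m m \<and> piv_ok m M P \<and> rowinj P \<and> comb m D M P \<and>
     C \<subseteq> {..<m} \<and> (\<forall>k<m. k\<in>C \<longleftrightarrow> (\<forall>i. (i,k)\<notin>P)) \<and>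
     (\<forall>i k. (i,k)\<in>P \<longrightarrow> (\<forall>i'. i \<le> i' \<and> i'<m \<longrightarrow> (\<forall>b\<in>C. M$$(i',b) = 0)))"

lemma rev_invD:
  assumes "rev_inv m D M C P"
  shows "M \<in> carrier_mat m m" "piv_ok m M P" "rowinj P" "comb m D M P" "C \<subseteq> {..<m}"
    "\<And>k. k<m \<Longrightarrow> k\<in>C \<longleftrightarrow> (\<forall>i. (i,k)\<notin>P)"
  using assms unfolding rev_inv_def by simp_all

lemma rev_invG:
  assumes "rev_inv m D M C P" "(i,k)\<in>P" "i \<le> i'" "i'<m" "b\<in>C"
  shows "M$$(i',b) = 0"
proof -
  have G: "\<forall>i k. (i,k)\<in>P \<longrightarrow> (\<forall>i'. i \<le> i' \<and> i'<m \<longrightarrow> (\<forall>b\<in>C. M$$(i',b) = 0))"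
    using assms(1) unfolding rev_inv_def by simp
  show ?thesis using G assms(2-5) by blast
qed

lemma rev_invI:
  assumes "M \<in> carrier_mat m m" "piv_ok m M P" "rowinj P" "comb m D M P" "C \<subseteq> {..<m}"
    "\<And>k. k<m \<Longrightarrow> k\<in>C \<longleftrightarrow> (\<forall>i. (i,k)\<notin>P)"
    "\<And>i k i' b. (i,k)\<in>P \<Longrightarrow> i \<le> i' \<Longrightarrow> i'<m \<Longrightarrow> b\<in>C \<Longrightarrow> M$$(i',b) = 0"
  shows "rev_inv m D M C P"
  unfolding rev_inv_def using assms by simp

lemma rev_step_inv:
  assumes inv: "rev_inv m D M C P" and act: "rev_active m M C"
  shows "rev_inv m D (fst (rev_step m (M,C,P))) (fst (snd (rev_step m (M,C,P)))) (snd (snd (rev_step m (M,C,P))))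
    \<and> rev_j m M C \<in> C \<and> fst (snd (rev_step m (M,C,P))) = C - {rev_j m M C}"
proof -
  have Mc: "M \<in> carrier_mat m m" and pv: "piv_ok m M P" and ri: "rowinj P" and cb: "comb m D M P"
    and Cm: "C \<subseteq> {..<m}" and CP: "\<And>k. k<m \<Longrightarrow> k\<in>C \<longleftrightarrow> (\<forall>i. (i,k)\<notin>P)"
    using rev_invD[OF inv] by blast+
  have G: "\<And>i k i' b. (i,k)\<in>P \<Longrightarrow> i \<le> i' \<Longrightarrow> i'<m \<Longrightarrow> b\<in>C \<Longrightarrow> M$$(i',b) = 0"
    using rev_invG[OF inv] by blast
  have pvE: "i<m" "p<m" "M$$(i,p) \<noteq> 0" "\<And>i'. i<i' \<Longrightarrow> i'<m \<Longrightarrow> M$$(i',p) = 0" if "(i,p)\<in>P" for i p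
    using pv that unfolding piv_ok_def by blast+
  define it where "it = rev_i m M C"
  define jt where "jt = rev_j m M C"
  define Is where "Is = {i. i < m \<and> (\<exists>j\<in>C. M$$(i,j) \<noteq> 0)}"
  have finIs: "finite Is" unfolding Is_def by auto
  have neIs: "Is \<noteq> {}" using act unfolding Is_def rev_active_def by auto
  have itIs: "it \<in> Is" unfolding it_def rev_i_def Is_def[symmetric] using finIs neIs by simp
  have itmax: "\<And>i. i\<in>Is \<Longrightarrow> i \<le> it" unfolding it_def rev_i_def Is_def[symmetric] using finIs by simp
  have itm: "it < m" using itIs unfolding Is_def by simp
  have below_zero: "M$$(i',b) = 0" if "it < i'" "i'<m" "b\<in>C" for i' b
    using itmax[of i'] that unfolding Is_def by auto
  define Js where "Js = {j \<in> C. M$$(it,j) \<noteq> 0}"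
  have finC: "finite C" using finite_subset[OF Cm finite_lessThan] .
  have finJs: "finite Js" unfolding Js_def using finC by simp
  have neJs: "Js \<noteq> {}" using itIs unfolding Js_def Is_def by auto
  have jtJs: "jt \<in> Js" unfolding jt_def rev_j_def it_def[symmetric] Js_def[symmetric] using finJs neJs by simp
  have jtmin: "\<And>j. j\<in>Js \<Longrightarrow> jt \<le> j" unfolding jt_def rev_j_def it_def[symmetric] Js_def[symmetric] using finJs by simp
  have jtC: "jt \<in> C" and Mjt: "M$$(it,jt) \<noteq> 0" using jtJs unfolding Js_def by auto
  have jtm: "jt < m" using jtC Cm by auto
  define a where "a b = M$$(it,b) / M$$(it,jt)" for b
  define T where "T = rev_T m M C"
  have Tc: "T \<in> carrier_mat m m" unfolding T_def rev_T_def Let_def by simp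
  have Tent: "T$$(y,b) = (if y=b then 1 else 0) - (if b\<in>C \<and> jt < b \<and> y = jt then a b else 0)"
    if y: "y<m" and b: "b<m" for y b
  proof -
    have "T$$(y,b) = (if y=b then 1 else 0) - (\<Sum>j\<in>{j \<in> C. j > jt}. a j * (U_mat m jt j $$ (y, b)))"
      unfolding T_def rev_T_def Let_def it_def[symmetric] jt_def[symmetric] a_def using y b by simp
    also have "(\<Sum>j\<in>{j \<in> C. j > jt}. a j * (U_mat m jt j $$ (y, b))) = (\<Sum>j\<in>{j \<in> C. j > jt}. if j = b then (if y = jt then a b else 0) else 0)"
      by (rule sum.cong) (auto simp: U_mat_def y b)
    also have "\<dots> = (if b\<in>C \<and> jt < b \<and> y = jt then a b else 0)"
      using finC by (simp add: sum.delta)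
    finally show ?thesis .
  qed
  define M' where "M' = M * T"
  have M'c: "M' \<in> carrier_mat m m" unfolding M'_def using Mc Tc by simp
  have M'e: "M'$$(x,b) = M$$(x,b) - (if b\<in>C \<and> jt < b then a b * M$$(x,jt) else 0)" if x: "x<m" and b: "b<m" for x b
  proof -
    have "M'$$(x,b) = (\<Sum>y\<in>{0..<m}. M$$(x,y) * ((if y=b then 1 else 0) - (if b\<in>C \<and> jt < b \<and> y = jt then a b else 0)))"
      unfolding M'_def using mat_mult_entry[OF Mc Tc x b] Tent b by simp
    also have "\<dots> = M$$(x,b) - (if b\<in>C \<and> jt < b then a b * M$$(x,jt) else 0)"
      using b jtm by (auto simp: right_diff_distrib sum_subtractf if_distrib[of "\<lambda>t. _ * t"] cong: if_cong)
    finally show ?thesis .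
  qed
  define P' where "P' = P \<union> {(it,jt)}"
  define C' where "C' = C - {jt}"
  have step: "rev_step m (M,C,P) = (M', C', P')"
    unfolding rev_step_def Let_def M'_def T_def P'_def C'_def it_def jt_def by simp
  have itnotP: "(it,k)\<notin>P" for k
  proof
    assume "(it,k)\<in>P"
    hence "M$$(it,jt) = 0" using G[of it k it jt] itm jtC by simp
    thus False using Mjt by simp
  qed
  have frz: "M'$$(x,k) = M$$(x,k)" if "(i0,k)\<in>P'" "x<m" for i0 k x
  proof -
    have "k \<notin> C \<or> k = jt"
    proof (cases "(i0,k)\<in>P")
      case True
      hence "k<m" using pvE by blast
      thus ?thesis using CP True by blast
    qed (use that P'_def in auto)
    moreover have "k<m" using that pvE jtm unfolding P'_def by auto
    ultimately show ?thesis using M'e[OF that(2)] by auto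
  qed
  have inv': "rev_inv m D M' C' P'"
    unfolding rev_inv_def
  proof (intro conjI)
    show "M' \<in> carrier_mat m m" by (rule M'c)
    show "piv_ok m M' P'"
      unfolding piv_ok_def
    proof (intro allI impI)
      fix i k assume ik: "(i,k)\<in>P'"
      show "i<m \<and> k<m \<and> M'$$(i,k) \<noteq> 0 \<and> (\<forall>i'. i<i' \<and> i'<m \<longrightarrow> M'$$(i',k) = 0)"
      proof (cases "(i,k)\<in>P")
        case True thus ?thesis using pvE frz ik by auto
      next
        case False
        hence "i = it" "k = jt" using ik unfolding P'_def by auto
        thus ?thesis using itm jtm Mjt below_zero jtC frz ik by auto
      qed
    qed
    show "rowinj P'"
      using ri itnotP unfolding rowinj_def P'_def by blast
    show "comb m D M' P'"
    proof (rule comb_step[OF cb])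
      show "P \<subseteq> P'" unfolding P'_def by auto
    next
      fix k i i0 assume "(i0,k)\<in>P'" "i<m" thus "M'$$(i,k) = M$$(i,k)" by (rule frz)
    next
      fix j assume j: "j<m"
      show "(\<forall>x<m. M'$$(x,j) = M$$(x,j)) \<or>
       (\<exists>p i a. (i,p)\<in>P' \<and> p<j \<and> i<m \<and> M$$(i,j) \<noteq> 0 \<and>
          (\<forall>i'. i<i' \<and> i'<m \<longrightarrow> M$$(i',j) = 0 \<and> M$$(i',p)=0) \<and>
          (\<forall>x<m. M'$$(x,j) = M$$(x,j) - a * M$$(x,p)) \<and> M'$$(i,j) = 0)"
      proof (cases "j\<in>C \<and> jt < j \<and> M$$(it,j) \<noteq> 0")
        case False
        hence "\<forall>x<m. M'$$(x,j) = M$$(x,j)"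
        proof (cases "j\<in>C \<and> jt < j")
          case True
          hence "a j = 0" using False unfolding a_def by simp
          thus ?thesis using M'e j True by simp
        qed (use M'e j in auto)
        thus ?thesis by simp
      next
        case True
        have z: "M'$$(it,j) = 0" using M'e[OF itm j] True Mjt unfolding a_def by simp
        show ?thesis
          apply (rule disjI2)
          apply (rule exI[of _ jt], rule exI[of _ it], rule exI[of _ "a j"])
          using True itm jtC below_zero M'e z j unfolding P'_def by auto
      qed
    qed
    show "C' \<subseteq> {..<m}" using Cm unfolding C'_def by auto
    show "\<forall>k<m. k\<in>C' \<longleftrightarrow> (\<forall>i. (i,k)\<notin>P')"
      using CP jtC unfolding C'_def P'_def by auto
    show "\<forall>i k. (i,k)\<in>P' \<longrightarrow> (\<forall>i'. i \<le> i' \<and> i'<m \<longrightarrow> (\<forall>b\<in>C'. M'$$(i',b) = 0))"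
    proof (intro allI impI ballI)
      fix i k i' b assume ik: "(i,k)\<in>P'" and ii: "i \<le> i' \<and> i'<m" and b: "b\<in>C'"
      have bC: "b\<in>C" "b \<noteq> jt" "b<m" using b Cm unfolding C'_def by auto
      show "M'$$(i',b) = 0"
      proof (cases "(i,k)\<in>P")
        case True
        have "M$$(i',b) = 0" "M$$(i',jt) = 0" using G[OF True] ii bC jtC by auto
        thus ?thesis using M'e[of i' b] ii bC by simp
      next
        case False
        hence iit: "i = it" using ik unfolding P'_def by auto
        show ?thesis
        proof (cases "it < i'")
          case True
          thus ?thesis using M'e[of i' b] below_zero ii bC jtC by simp
        next
          case False
          hence "i' = it" using ii iit by simp
          show ?thesis
          proof (cases "jt < b")
            case True
            thus ?thesis using M'e[of it b] \<open>i' = it\<close> itm bC Mjt unfolding a_def by simp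
          next
            case False
            hence "b < jt" using bC by simp
            hence "M$$(it,b) = 0" using jtmin[of b] bC unfolding Js_def by auto
            thus ?thesis using M'e[of it b] \<open>i' = it\<close> itm bC False by simp
          qed
        qed
      qed
    qed
  qed
  show ?thesis using inv' step jtC unfolding jt_def C'_def by simp
qed

lemma rev_loop_inv:
  "rev_inv m D M C P \<Longrightarrow> card C \<le> n \<Longrightarrow>
   rev_inv m D (fst (rev_loop m n (M,C,P))) (fst (snd (rev_loop m n (M,C,P)))) (snd (snd (rev_loop m n (M,C,P))))
   \<and> \<not> rev_active m (fst (rev_loop m n (M,C,P))) (fst (snd (rev_loop m n (M,C,P))))"
proof (induction n arbitrary: M C P)
  case 0
  have "C \<subseteq> {..<m}" using rev_invD(5)[OF "0.prems"(1)] .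
  hence "finite C" using finite_subset[OF _ finite_lessThan] by blast
  hence "C = {}" using "0.prems"(2) by simp
  have e: "rev_loop m 0 (M,C,P) = (M,C,P)" by simp
  show ?case unfolding e fst_conv snd_conv rev_active_def using "0.prems"(1) \<open>C = {}\<close> by blast
next
  case (Suc n)
  show ?case
  proof (cases "rev_active m M C")
    case False
    hence eq: "rev_loop m (Suc n) (M,C,P) = (M,C,P)" by simp
    show ?thesis unfolding eq fst_conv snd_conv using Suc.prems(1) False by blast
  next
    case True
    note st = rev_step_inv[OF Suc.prems(1) True]
    obtain M1 C1 P1 where e: "rev_step m (M,C,P) = (M1,C1,P1)" by (cases "rev_step m (M,C,P)") auto
    have st': "rev_inv m D M1 C1 P1" "rev_j m M C \<in> C" "C1 = C - {rev_j m M C}"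
      using st unfolding e fst_conv snd_conv by blast+
    have "C \<subseteq> {..<m}" using rev_invD(5)[OF Suc.prems(1)] .
    hence fin: "finite C" using finite_subset[OF _ finite_lessThan] by blast
    have "card C1 = card C - 1" unfolding st'(3) using st'(2) by (rule card_Diff_singleton)
    moreover have "card C > 0" using st'(2) fin by (auto simp: card_gt_0_iff)
    ultimately have cn: "card C1 \<le> n" using Suc.prems(2) by linarith
    have eq: "rev_loop m (Suc n) (M,C,P) = rev_loop m n (M1,C1,P1)" using True e by simp
    show ?thesis unfolding eq by (rule Suc.IH[OF st'(1) cn])
  qed
qed

lemma rev_spec:
  assumes cm: "connection_matrix_2 m D J0 J1"
  shows "spec m D (fst (rev_final m D)) (snd (rev_final m D))"
proof -
  have Dc: "D \<in> carrier_mat m m" using cm unfolding connection_matrix_2_def by blast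
  have cb: "comb m D D {}" unfolding comb_def by (intro allI impI exI[of _ "\<lambda>_. 0"]) simp
  have i0: "rev_inv m D D {0..<m} {}" by (rule rev_invI) (use Dc cb in \<open>auto simp: piv_ok_def rowinj_def\<close>)
  define S where "S = rev_loop m m (D, {0..<m}, {})"
  have L: "rev_inv m D (fst S) (fst (snd S)) (snd (snd S)) \<and> \<not> rev_active m (fst S) (fst (snd S))"
    unfolding S_def by (rule rev_loop_inv[OF i0]) simp
  have Li: "fst S \<in> carrier_mat m m" "piv_ok m (fst S) (snd (snd S))" "rowinj (snd (snd S))" "comb m D (fst S) (snd (snd S))"
    "\<And>k. k<m \<Longrightarrow> k \<in> fst (snd S) \<longleftrightarrow> (\<forall>i. (i,k)\<notin>snd (snd S))"
    and na: "\<not> rev_active m (fst S) (fst (snd S))"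
    using rev_invD[OF conjunct1[OF L]] conjunct2[OF L] by blast+
  have z: "zero_np m (fst S) (snd (snd S))"
    unfolding zero_np_def
  proof (intro allI impI)
    fix k i assume "k<m" "\<forall>i. (i,k)\<notin>snd (snd S)" "i<m"
    hence "k \<in> fst (snd S)" using Li(5) by blast
    thus "fst S $$ (i,k) = 0" using na \<open>i<m\<close> unfolding rev_active_def by blast
  qed
  have e: "rev_final m D = (fst S, snd (snd S))" by (simp add: rev_final_def S_def Let_def)
  have sp: "spec m D (fst S) (snd (snd S))"
    unfolding spec_def using Li z by blast
  show ?thesis unfolding e fst_conv snd_conv by (rule sp)
qed

theorem mainTheorem8:
  fixes D :: "'a::field mat" and m :: nat and J0 J1 :: "nat set"
  assumes "m \<ge> 1"
    and "connection_matrix_2 m D J0 J1"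
  shows "fst (rev_final m D) = fst (isa_final m D) \<and>
         snd (rev_final m D) = snd (isa_final m D)"
  by (rule spec_unique[OF rev_spec[OF assms(2)] isa_spec[OF assms(2,1)]])


end
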